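(* Let $t,\Delta\in\mathbb{N}$. If $A_1$ $(t,\Delta)$-approximates $B_1$ and $A_2$ $(t,\Delta)$-approximates $B_2$, then $A_1\oplus_t A_2$ $(t,\Delta)$-approximates $B_1\oplus_t B_2$.
   Context: $\mathbb{N}=\{0,1,2,\dots\}$, $[t]=\{0,1,\dots,t\}$. For $A,B\subseteq\mathbb{N}$, $A+B=\{a+b: a\in A, b\in B\}$ and $A\oplus_t B=(A+B)\cap[t]$. For $A\subseteq[t]$ and $b\in\mathbb{N}$ define $\mathrm{apx}^-_t(b,A)=\max\{a\in A\cup\{t+1\}: a\le b\}$ and $\mathrm{apx}^+_t(b,A)=\min\{a\in A\cup\{t+1\}: a\ge b\}$, with $\max\emptyset=-\infty$, $\min\emptyset=\infty$. $A$ $(t,\Delta)$-approximates $B$ if $A\subseteq B\subseteq[t]$ and for every $b\in B$, $\mathrm{apx}^+_t(b,A)-\mathrm{apx}^-_t(b,A)\le\Delta$. *)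

theory Defs
  imports "HOL-Library.Extended_Real"
begin

definition sumset :: "nat set \<Rightarrow> nat set \<Rightarrow> nat set" where
  "sumset A B = {a + b | a b. a \<in> A \<and> b \<in> B}"

definition capped_sumset :: "nat \<Rightarrow> nat set \<Rightarrow> nat set \<Rightarrow> nat set" where
  "capped_sumset t A B = sumset A B \<inter> {0..t}"

definition apx_minus :: "nat \<Rightarrow> nat \<Rightarrow> nat set \<Rightarrow> ereal" where
  "apx_minus t b A = Sup ((\<lambda>a. ereal (real a)) ` {a \<in> A \<union> {t+1}. a \<le> b})"

definition apx_plus :: "nat \<Rightarrow> nat \<Rightarrow> nat set \<Rightarrow> ereal" where
  "apx_plus t b A = Inf ((\<lambda>a. ereal (real a)) ` {a \<in> A \<union> {t+1}. b \<le> a})"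

definition approximates :: "nat \<Rightarrow> nat \<Rightarrow> nat set \<Rightarrow> nat set \<Rightarrow> bool" where
  "approximates t \<Delta> A B \<longleftrightarrow> A \<subseteq> B \<and> B \<subseteq> {0..t} \<and>
     (\<forall>b\<in>B. apx_plus t b A - apx_minus t b A \<le> ereal (real \<Delta>))"

end

theory Submission
  imports Defs
begin

lemma sup_img:
  assumes "finite (S::nat set)" "S \<noteq> {}"
  shows "Sup ((\<lambda>a. ereal (real a)) ` S) = ereal (real (Max S))"
proof (rule antisym)
  show "Sup ((\<lambda>a. ereal (real a)) ` S) \<le> ereal (real (Max S))"
    using assms by (intro Sup_least) auto
  show "ereal (real (Max S)) \<le> Sup ((\<lambda>a. ereal (real a)) ` S)"
    using assms by (intro Sup_upper) auto
qed

lemma inf_img: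
  assumes "finite (S::nat set)" "S \<noteq> {}"
  shows "Inf ((\<lambda>a. ereal (real a)) ` S) = ereal (real (Min S))"
proof (rule antisym)
  show "Inf ((\<lambda>a. ereal (real a)) ` S) \<le> ereal (real (Min S))"
    using assms by (intro Inf_lower) auto
  show "ereal (real (Min S)) \<le> Inf ((\<lambda>a. ereal (real a)) ` S)"
    using assms by (intro Inf_greatest) auto
qed

lemma char:
  assumes "A \<subseteq> {0..t}" "b \<le> t"
  shows "apx_plus t b A - apx_minus t b A \<le> ereal (real \<Delta>) \<longleftrightarrow>
    (\<exists>l\<in>A. l \<le> b \<and> (\<exists>u. b \<le> u \<and> (u \<in> A \<or> t < u) \<and> u - l \<le> \<Delta>))"
proof -
  define Sm where "Sm = {a \<in> A \<union> {t+1}. a \<le> b}"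
  define Sp where "Sp = {a \<in> A \<union> {t+1}. b \<le> a}"
  have fin: "finite A" using assms(1) finite_subset by blast
  have fSm: "finite Sm" "finite Sp" unfolding Sm_def Sp_def using fin by auto
  have Spne: "Sp \<noteq> {}" "t+1 \<in> Sp" unfolding Sp_def using assms by auto
  have plus: "apx_plus t b A = ereal (real (Min Sp))"
    unfolding apx_plus_def Sp_def[symmetric] using inf_img fSm Spne by auto
  have Sm_eq: "Sm = {a \<in> A. a \<le> b}" unfolding Sm_def using assms by auto
  have MinSp: "Min Sp \<in> Sp" using fSm Spne by auto
  have MinSp_le: "\<And>x. x \<in> Sp \<Longrightarrow> Min Sp \<le> x" using fSm by auto
  show ?thesis
  proof (cases "Sm = {}")
    case True
    have "apx_minus t b A = -\<infinity>" unfolding apx_minus_def Sm_def[symmetric] True by (metis Sup_empty bot_ereal_def image_empty)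
    then have "\<not> apx_plus t b A - apx_minus t b A \<le> ereal (real \<Delta>)" using plus by simp
    moreover have "\<not> (\<exists>l\<in>A. l \<le> b)" using True Sm_eq by auto
    ultimately show ?thesis by blast
  next
    case False
    have minus: "apx_minus t b A = ereal (real (Max Sm))"
      unfolding apx_minus_def Sm_def[symmetric] using sup_img fSm False by auto
    have MaxSm: "Max Sm \<in> Sm" using fSm False by auto
    have MaxSm_ge: "\<And>x. x \<in> Sm \<Longrightarrow> x \<le> Max Sm" using fSm by auto
    have le: "Max Sm \<le> Min Sp" using MaxSm MinSp unfolding Sm_def Sp_def by auto
    have "apx_plus t b A - apx_minus t b A \<le> ereal (real \<Delta>) \<longleftrightarrow> Min Sp - Max Sm \<le> \<Delta>"
    proof -
      have e: "apx_plus t b A - apx_minus t b A = ereal (real (Min Sp) - real (Max Sm))"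
        using plus minus by simp
      have r: "real (Min Sp) - real (Max Sm) = real (Min Sp - Max Sm)"
        using le by (simp add: of_nat_diff)
      show ?thesis unfolding e r by simp
    qed
    also have "\<dots> \<longleftrightarrow> (\<exists>l\<in>A. l \<le> b \<and> (\<exists>u. b \<le> u \<and> (u \<in> A \<or> t < u) \<and> u - l \<le> \<Delta>))"
    proof
      assume h: "Min Sp - Max Sm \<le> \<Delta>"
      show "\<exists>l\<in>A. l \<le> b \<and> (\<exists>u. b \<le> u \<and> (u \<in> A \<or> t < u) \<and> u - l \<le> \<Delta>)"
        apply (rule bexI[of _ "Max Sm"])
        using MaxSm MinSp h Sm_eq unfolding Sp_def by auto
    next
      assume "\<exists>l\<in>A. l \<le> b \<and> (\<exists>u. b \<le> u \<and> (u \<in> A \<or> t < u) \<and> u - l \<le> \<Delta>)"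
      then obtain l u where l: "l \<in> A" "l \<le> b" and u: "b \<le> u" "u \<in> A \<or> t < u" "u - l \<le> \<Delta>"
        by blast
      have "l \<le> Max Sm" using MaxSm_ge l Sm_eq by auto
      moreover have "Min Sp \<le> u"
      proof (cases "u \<in> A")
        case True then show ?thesis using MinSp_le u unfolding Sp_def by auto
      next
        case False then have "t+1 \<le> u" using u by auto
        then show ?thesis using MinSp_le[OF Spne(2)] by auto
      qed
      ultimately show "Min Sp - Max Sm \<le> \<Delta>" using u by linarith
    qed
    finally show ?thesis .
  qed
qed

theorem lemma4p5:
  fixes t \<Delta> :: nat and A1 A2 B1 B2 :: "nat set"
  assumes "approximates t \<Delta> A1 B1"
      and "approximates t \<Delta> A2 B2"
  shows "approximates t \<Delta> (capped_sumset t A1 A2) (capped_sumset t B1 B2)"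
proof -
  let ?C = "capped_sumset t A1 A2"
  have s1: "A1 \<subseteq> B1" "B1 \<subseteq> {0..t}" and a1: "\<And>b. b \<in> B1 \<Longrightarrow> apx_plus t b A1 - apx_minus t b A1 \<le> ereal (real \<Delta>)"
    using assms(1) unfolding approximates_def by auto
  have s2: "A2 \<subseteq> B2" "B2 \<subseteq> {0..t}" and a2: "\<And>b. b \<in> B2 \<Longrightarrow> apx_plus t b A2 - apx_minus t b A2 \<le> ereal (real \<Delta>)"
    using assms(2) unfolding approximates_def by auto
  have sub: "?C \<subseteq> capped_sumset t B1 B2"
    using s1 s2 unfolding capped_sumset_def sumset_def by blast
  have Ct: "?C \<subseteq> {0..t}" "capped_sumset t B1 B2 \<subseteq> {0..t}" unfolding capped_sumset_def by auto
  have memC: "x + y \<in> ?C" if "x \<in> A1" "y \<in> A2" "x + y \<le> t" for x y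
    using that unfolding capped_sumset_def sumset_def by auto
  have "apx_plus t b ?C - apx_minus t b ?C \<le> ereal (real \<Delta>)" if b: "b \<in> capped_sumset t B1 B2" for b
  proof -
    obtain b1 b2 where bb: "b = b1 + b2" "b1 \<in> B1" "b2 \<in> B2" "b \<le> t"
      using b unfolding capped_sumset_def sumset_def by auto
    have "b1 \<le> t" "b2 \<le> t" using bb by auto
    have "A1 \<subseteq> {0..t}" using s1 by blast
    from a1[OF bb(2)] char[of A1 t b1 \<Delta>, OF this \<open>b1 \<le> t\<close>]
    obtain l1 u1 where l1: "l1 \<in> A1" "l1 \<le> b1" and u1: "b1 \<le> u1" "u1 \<in> A1 \<or> t < u1" "u1 - l1 \<le> \<Delta>"
      by blast
    have "A2 \<subseteq> {0..t}" using s2 by blast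
    from a2[OF bb(3)] char[of A2 t b2 \<Delta>, OF this \<open>b2 \<le> t\<close>]
    obtain l2 u2 where l2: "l2 \<in> A2" "l2 \<le> b2" and u2: "b2 \<le> u2" "u2 \<in> A2 \<or> t < u2" "u2 - l2 \<le> \<Delta>"
      by blast
    have "\<exists>l\<in>?C. l \<le> b \<and> (\<exists>u. b \<le> u \<and> (u \<in> ?C \<or> t < u) \<and> u - l \<le> \<Delta>)"
    proof (cases "b \<le> l1 + u2")
      case True
      have "l1 + u2 \<in> ?C \<or> t < l1 + u2"
      proof (cases "u2 \<in> A2 \<and> l1 + u2 \<le> t")
        case True then show ?thesis using memC[OF l1(1)] by blast
      next
        case False then show ?thesis using u2(2) by linarith
      qed
      moreover have "l1 + l2 \<in> ?C" by (rule memC[OF l1(1) l2(1)]) (use l1(2) l2(2) bb(1,4) in linarith)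
      moreover have "l1 + l2 \<le> b" using l1(2) l2(2) bb(1) by linarith
      moreover have "l1 + u2 - (l1 + l2) \<le> \<Delta>" using u2(3) by linarith
      ultimately show ?thesis using True by blast
    next
      case False
      then have "u2 \<in> A2" "l1 + u2 \<le> t" using u2(2) bb(4) by linarith+
      then have "l1 + u2 \<in> ?C" using memC[OF l1(1)] by blast
      moreover have "u1 + u2 \<in> ?C \<or> t < u1 + u2"
      proof (cases "u1 \<in> A1 \<and> u1 + u2 \<le> t")
        case True then show ?thesis using memC[of u1 u2] \<open>u2 \<in> A2\<close> by blast
      next
        case False then show ?thesis using u1(2) by linarith
      qed
      moreover have "b \<le> u1 + u2" using u1(1) u2(1) bb(1) by linarith
      moreover have "u1 + u2 - (l1 + u2) \<le> \<Delta>" using u1(3) by linarith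
      moreover have "l1 + u2 \<le> b" using False by simp
      ultimately show ?thesis by blast
    qed
    then show ?thesis using char[of ?C t b \<Delta>, OF Ct(1) bb(4)] by blast
  qed
  then show ?thesis unfolding approximates_def using sub Ct by auto
qed

end
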